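(* $k$-monotonicity is extendable: for any finite poset $\mathcal{P}$, any subset $X\subseteq\mathcal{P}$, and any function $f\colon X\to\{0,1\}$ that is $k$-monotone on $X$, there exists $g\colon\mathcal{P}\to\{0,1\}$ with $g(x)=f(x)$ for all $x\in X$ such that $g$ is $k$-monotone on $\mathcal{P}$.
   Context: For a subset $S$ of a poset (with the induced order), a function $f\colon S\to\{0,1\}$ is $k$-monotone on $S$ if there is no chain $x_1\prec\cdots\prec x_{k+1}$ of elements of $S$ with $f(x_1)=1$ and $f(x_i)\neq f(x_{i+1})$ for all $i\in[k]$. *)

theory Defs
  imports Main
begin

text \<open>A function f : S -> {0,1} (encoded as bool, True = 1) is k-monotone on S
  (with the order induced from the ambient poset) iff there is no chain
  x_0 < x_1 < ... < x_k of elements of S with f(x_0) = 1 and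
  f(x_i) different from f(x_(i+1)) for all i < k (indices shifted by one).\<close>
definition k_monotone_on :: "nat \<Rightarrow> 'a::order set \<Rightarrow> ('a \<Rightarrow> bool) \<Rightarrow> bool" where
  "k_monotone_on k S f \<longleftrightarrow>
     \<not> (\<exists>x::nat \<Rightarrow> 'a. (\<forall>i\<le>k. x i \<in> S) \<and> (\<forall>i<k. x i < x (Suc i)) \<and>
            f (x 0) \<and> (\<forall>i<k. f (x i) \<noteq> f (x (Suc i))))"

end

theory Submission
  imports Defs
begin

definition ch :: "'a::order set \<Rightarrow> ('a \<Rightarrow> bool) \<Rightarrow> nat \<Rightarrow> 'a \<Rightarrow> bool" where
  "ch X f L z \<longleftrightarrow> (\<exists>x. L \<ge> 1 \<and> (\<forall>i<L. x i \<in> X) \<and> (\<forall>i. Suc i < L \<longrightarrow> x i < x (Suc i))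
     \<and> f (x 0) \<and> (\<forall>i. Suc i < L \<longrightarrow> f (x i) \<noteq> f (x (Suc i))) \<and> x (L - 1) = z)"

lemma ch_bound:
  assumes "k_monotone_on k X f" "ch X f L z" shows "L \<le> k"
proof (rule ccontr)
  assume "\<not> L \<le> k"
  obtain x where x: "(\<forall>i<L. x i \<in> X)" "(\<forall>i. Suc i < L \<longrightarrow> x i < x (Suc i))"
     "f (x 0)" "(\<forall>i. Suc i < L \<longrightarrow> f (x i) \<noteq> f (x (Suc i)))"
    using assms(2) unfolding ch_def by blast
  have "(\<forall>i\<le>k. x i \<in> X) \<and> (\<forall>i<k. x i < x (Suc i)) \<and> f (x 0) \<and> (\<forall>i<k. f (x i) \<noteq> f (x (Suc i)))"
    using x \<open>\<not> L \<le> k\<close> by auto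
  then show False using assms(1) unfolding k_monotone_on_def by blast
qed

lemma ch_val:
  assumes "ch X f L z" shows "f z = odd L"
proof -
  obtain x where x: "L \<ge> 1" "f (x 0)" "(\<forall>i. Suc i < L \<longrightarrow> f (x i) \<noteq> f (x (Suc i)))" "x (L - 1) = z"
    using assms unfolding ch_def by blast
  have "\<And>i. i < L \<Longrightarrow> f (x i) = even i"
  proof -
    fix i show "i < L \<Longrightarrow> f (x i) = even i"
      by (induction i) (use x in auto)
  qed
  from this[of "L - 1"] x show ?thesis by (cases L) auto
qed

lemma ch_ext:
  assumes "ch X f L z" "z < y" "y \<in> X" "f y \<noteq> f z" shows "ch X f (Suc L) y"
proof -
  obtain x where x: "L \<ge> 1" "(\<forall>i<L. x i \<in> X)" "(\<forall>i. Suc i < L \<longrightarrow> x i < x (Suc i))"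
     "f (x 0)" "(\<forall>i. Suc i < L \<longrightarrow> f (x i) \<noteq> f (x (Suc i)))" "x (L - 1) = z"
    using assms(1) unfolding ch_def by blast
  define x' where "x' = x(L := y)"
  have xi: "i < L \<Longrightarrow> x' i = x i" for i unfolding x'_def by simp
  have xL: "x' L = y" unfolding x'_def by simp
  have A: "x' i < x' (Suc i) \<and> f (x' i) \<noteq> f (x' (Suc i))" if "Suc i < Suc L" for i
  proof (cases "Suc i = L")
    case True
    then have "i = L - 1" "i < L" by auto
    then have "x' i = z" using xi x(6) by simp
    then show ?thesis using True xL assms(2,4) by simp
  next
    case False
    then have "Suc i < L" "i < L" using that by auto
    then show ?thesis using xi[of i] xi[of "Suc i"] x(3,5) by simp
  qed
  have B: "x' i \<in> X" if "i < Suc L" for i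
  proof (cases "i = L")
    case True then show ?thesis using xL assms(3) by simp
  next
    case False then show ?thesis using that xi[of i] x(2) by simp
  qed
  have C: "f (x' 0)" using xi[of 0] x(1,4) by simp
  have D: "x' (Suc L - 1) = y" using xL by simp
  show ?thesis unfolding ch_def
  proof (rule exI[of _ x'], intro conjI allI impI)
    show "1 \<le> Suc L" by simp
    show "f (x' 0)" by (rule C)
    show "x' (Suc L - 1) = y" by (rule D)
  next
    fix i assume "i < Suc L" then show "x' i \<in> X" by (rule B)
  next
    fix i assume "Suc i < Suc L" then show "x' i < x' (Suc i)" using A by blast
  next
    fix i assume "Suc i < Suc L" then show "f (x' i) \<noteq> f (x' (Suc i))" using A by blast
  qed
qed

lemma ch_one: "y \<in> X \<Longrightarrow> f y \<Longrightarrow> ch X f 1 y"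
  unfolding ch_def by (intro exI[of _ "\<lambda>_. y"]) auto

theorem lemmaB7:
  fixes P X :: "'a::order set" and f :: "'a \<Rightarrow> bool" and k :: nat
  assumes "finite P" and "X \<subseteq> P" and "k_monotone_on k X f"
  shows "\<exists>g :: 'a \<Rightarrow> bool. (\<forall>x\<in>X. g x = f x) \<and> k_monotone_on k P g"
proof -
  define S where "S y = {L. \<exists>z. z \<le> y \<and> ch X f L z}" for y
  define r where "r y = Max (insert 0 (S y))" for y
  have Sb: "S y \<subseteq> {..k}" for y using ch_bound[OF assms(3)] unfolding S_def by auto
  have fin: "finite (insert 0 (S y))" for y using finite_subset[OF Sb[of y]] by simp
  have rk: "r y \<le> k" for y using Sb[of y] fin[of y] unfolding r_def by (subst Max_le_iff) auto
  have mono: "y \<le> y' \<Longrightarrow> r y \<le> r y'" for y y'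
  proof -
    assume "y \<le> y'"
    then have "S y \<subseteq> S y'" unfolding S_def using order_trans by blast
    then show ?thesis unfolding r_def using fin[of y'] by (intro Max_mono) auto
  qed
  have ge: "L \<in> S y \<Longrightarrow> L \<le> r y" for L y unfolding r_def using fin[of y] by (intro Max_ge) auto
  have agree: "odd (r y) = f y" if "y \<in> X" for y
  proof -
    have "r y \<in> insert 0 (S y)" unfolding r_def using fin[of y] by (intro Max_in) auto
    then show ?thesis
    proof
      assume r0: "r y = 0"
      show ?thesis
      proof (rule ccontr)
        assume "odd (r y) \<noteq> f y"
        then have "f y" using r0 by auto
        then have "1 \<in> S y" unfolding S_def using ch_one[OF that] by auto
        then show False using ge[of 1 y] r0 by simp
      qed
    next
      assume "r y \<in> S y"
      then obtain z where z: "z \<le> y" "ch X f (r y) z" unfolding S_def by auto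
      show ?thesis
      proof (cases "z = y")
        case True then show ?thesis using ch_val[OF z(2)] by simp
      next
        case False
        then have "z < y" using z by auto
        show ?thesis
        proof (rule ccontr)
          assume "odd (r y) \<noteq> f y"
          then have "f y \<noteq> f z" using ch_val[OF z(2)] by simp
          then have "ch X f (Suc (r y)) y" using ch_ext[OF z(2) \<open>z < y\<close> that] by simp
          then have "Suc (r y) \<in> S y" unfolding S_def by auto
          then show False using ge[of "Suc (r y)" y] by simp
        qed
      qed
    qed
  qed
  have "k_monotone_on k P (\<lambda>y. odd (r y))"
    unfolding k_monotone_on_def
  proof
    assume "\<exists>x. (\<forall>i\<le>k. x i \<in> P) \<and> (\<forall>i<k. x i < x (Suc i)) \<and> odd (r (x 0)) \<and>
              (\<forall>i<k. odd (r (x i)) \<noteq> odd (r (x (Suc i))))"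
    then obtain x where x: "\<forall>i<k. x i < x (Suc i)" "odd (r (x 0))"
       "\<forall>i<k. odd (r (x i)) \<noteq> odd (r (x (Suc i)))" by blast
    have "i \<le> k \<Longrightarrow> Suc i \<le> r (x i)" for i
    proof (induction i)
      case 0 then show ?case using x(2) by (cases "r (x 0)") auto
    next
      case (Suc i)
      then have "i < k" by simp
      then have "r (x i) \<le> r (x (Suc i))" "r (x i) \<noteq> r (x (Suc i))"
        using x mono[of "x i" "x (Suc i)"] by auto
      then show ?case using Suc by simp
    qed
    from this[of k] rk[of "x k"] show False by simp
  qed
  then show ?thesis using agree by (intro exI[of _ "\<lambda>y. odd (r y)"]) auto
qed

end
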